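(* Let $\alpha<\beta$ be real and let $T$ be an operator function on $[\alpha,\beta]$ satisfying (A1)–(A3), continuous in the norm resolvent sense, with each $T(\lambda)$ bounded from below, such that $\alpha,\beta\in\rho(T)$ and $\sigma(T)\cap(\alpha,\beta)$ is a finite subset of $\sigma_{dis}(T)$. Let $a,b\in[\alpha,\beta]$ with $a<b$, and let $\mathcal H_1\subset\mathcal D$ be a closed subspace of $\mathcal H$ with $\mathfrak t(a)[x]\le0$ for all $x\in\mathcal H_1$. Assume $(0,\delta)\subset\rho(T(b))$ for some $\delta>0$. Then the sums $\mathcal H_1+\mathcal L_{(0,\infty)}(T(b))$ and $\mathcal H_1+\mathcal L_{[0,\infty)}(T(b))$ are direct and closed.
   Context: For a self-adjoint operator $A$ with spectral measure $E$, $\mathcal L_\Delta(A):=\mathrm{ran}\,E(\Delta)$; its form is $\mathfrak a[x,y]=\int\mu\,d\langle E(\mu)x,y\rangle$ on $\mathrm{dom}(|A|^{1/2})$, $\mathfrak a[x]:=\mathfrak a[x,x]$. For an operator function $T$: $\sigma(T)=\{\lambda:0\in\sigma(T(\lambda))\}$, $\rho(T)=\{\lambda:0\in\rho(T(\lambda))\}$, $\sigma_{ess}(T)=\{\lambda: T(\lambda)\text{ not Fredholm}\}$, $\sigma_{dis}(T)=\sigma(T)\setminus\sigma_{ess}(T)$. (A1) $T(\lambda)$ self-adjoint, with form $\mathfrak t(\lambda)$; (A2) $\mathrm{dom}\,\mathfrak t(\lambda)=:\mathcal D$ independent of $\lambda$; (A3) for each $x\in\mathcal D\setminus\{0\}$,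 $\lambda\mapsto\mathfrak t(\lambda)[x]$ is continuous, and if $\mathfrak t(\lambda_0)[x]=0$ then $\mathfrak t(\lambda)[x]>0$ for $\lambda<\lambda_0$ and $<0$ for $\lambda>\lambda_0$. *)

theory Defs
  imports "HOL-Analysis.Analysis"
begin

text \<open>A complex Hilbert space is encoded as a real Hilbert space (real inner product
  = real part of the complex inner product) together with the multiplication by the
  imaginary unit, iscale, which is real-linear, squares to minus the identity and is
  orthogonal.\<close>

class complex_hilbert = real_inner + complete_space +
  fixes iscale :: "'a \<Rightarrow> 'a"
  assumes iscale_add: "iscale (x + y) = iscale x + iscale y"
    and iscale_scaleR: "iscale (r *\<^sub>R x) = r *\<^sub>R iscale x"
    and iscale_iscale: "iscale (iscale x) = - x"
    and inner_iscale: "inner (iscale x) (iscale y) = inner x y"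

definition cscale :: "complex \<Rightarrow> 'h::complex_hilbert \<Rightarrow> 'h" where
  "cscale z x = Re z *\<^sub>R x + Im z *\<^sub>R iscale x"

definition csubspace :: "'h::complex_hilbert set \<Rightarrow> bool" where
  "csubspace S \<longleftrightarrow> subspace S \<and> iscale ` S \<subseteq> S"

type_synonym 'h op = "'h set \<times> ('h \<Rightarrow> 'h)"

definition clinear_op :: "'h::complex_hilbert op \<Rightarrow> bool" where
  "clinear_op T \<longleftrightarrow> csubspace (fst T) \<and>
     (\<forall>x\<in>fst T. \<forall>y\<in>fst T. snd T (x + y) = snd T x + snd T y) \<and>
     (\<forall>x\<in>fst T. \<forall>r. snd T (r *\<^sub>R x) = r *\<^sub>R snd T x) \<and>
     (\<forall>x\<in>fst T. snd T (iscale x) = iscale (snd T x))"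

text \<open>For complex-linear operators the complex adjoint relation is equivalent to the
  relation for the real parts of the inner products, which is what is written.\<close>

definition self_adjoint_op :: "'h::complex_hilbert op \<Rightarrow> bool" where
  "self_adjoint_op T \<longleftrightarrow> clinear_op T \<and> closure (fst T) = UNIV \<and>
     (\<forall>y. y \<in> fst T \<longleftrightarrow> (\<exists>z. \<forall>x\<in>fst T. inner (snd T x) y = inner x z)) \<and>
     (\<forall>x\<in>fst T. \<forall>y\<in>fst T. inner (snd T x) y = inner x (snd T y))"

definition bounded_below_op :: "'h::complex_hilbert op \<Rightarrow> bool" where
  "bounded_below_op T \<longleftrightarrow> (\<exists>c. \<forall>x\<in>fst T. c * (norm x)\<^sup>2 \<le> inner (snd T x) x)"

definition resolvent_inv :: "'h::complex_hilbert op \<Rightarrow> complex \<Rightarrow> ('h \<Rightarrow> 'h) \<Rightarrow> bool" where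
  "resolvent_inv T z B \<longleftrightarrow> bounded_linear B \<and>
     (\<forall>y. B y \<in> fst T \<and> snd T (B y) - cscale z (B y) = y) \<and>
     (\<forall>x\<in>fst T. B (snd T x - cscale z x) = x)"

definition in_rho_op :: "'h::complex_hilbert op \<Rightarrow> complex \<Rightarrow> bool" where
  "in_rho_op T z \<longleftrightarrow> (\<exists>B. resolvent_inv T z B)"

definition resolvent_op :: "'h::complex_hilbert op \<Rightarrow> complex \<Rightarrow> 'h \<Rightarrow> 'h" where
  "resolvent_op T z = (SOME B. resolvent_inv T z B)"

definition fredholm_op :: "'h::complex_hilbert op \<Rightarrow> bool" where
  "fredholm_op T \<longleftrightarrow> closed (snd T ` fst T) \<and>
     (\<exists>F. finite F \<and> {x\<in>fst T. snd T x = 0} \<subseteq> span F) \<and>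
     (\<exists>F. finite F \<and> span (snd T ` fst T \<union> F) = UNIV)"

definition is_pvm :: "(real set \<Rightarrow> 'h::complex_hilbert \<Rightarrow> 'h) \<Rightarrow> bool" where
  "is_pvm E \<longleftrightarrow>
     (\<forall>S\<in>sets (borel::real measure). bounded_linear (E S) \<and>
        (\<forall>x. E S (E S x) = E S x) \<and> (\<forall>x y. inner (E S x) y = inner x (E S y)) \<and>
        (\<forall>x. E S (iscale x) = iscale (E S x))) \<and>
     (\<forall>x. E UNIV x = x) \<and>
     (\<forall>S\<in>sets (borel::real measure). \<forall>S'\<in>sets (borel::real measure).
        \<forall>x. E (S \<inter> S') x = E S (E S' x)) \<and>
     (\<forall>F. range F \<subseteq> sets (borel::real measure) \<longrightarrow> disjoint_family F \<longrightarrow>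
        (\<forall>x. (\<lambda>n. \<Sum>i<n. E (F i) x) \<longlonglongrightarrow> E (\<Union>i. F i) x))"

definition spec_meas :: "(real set \<Rightarrow> 'h::complex_hilbert \<Rightarrow> 'h) \<Rightarrow> 'h \<Rightarrow> real measure" where
  "spec_meas E x = measure_of UNIV (sets borel) (\<lambda>S. ennreal (inner (E S x) x))"

text \<open>E is the spectral measure of the self-adjoint operator T, i.e. T = \<integral> \<mu> dE(\<mu>):
  the domain is {x. \<integral> \<mu>^2 d<E x,x> < \<infinity>} and the quadratic forms agree
  (for self-adjoint T this determines T by polarization).\<close>

definition is_spectral_measure_of :: "'h::complex_hilbert op \<Rightarrow> (real set \<Rightarrow> 'h \<Rightarrow> 'h) \<Rightarrow> bool" where
  "is_spectral_measure_of T E \<longleftrightarrow> is_pvm E \<and>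
     fst T = {x. integrable (spec_meas E x) (\<lambda>t. t\<^sup>2)} \<and>
     (\<forall>x\<in>fst T. inner (snd T x) x = integral\<^sup>L (spec_meas E x) (\<lambda>t. t))"

text \<open>Form domain dom(|A|^(1/2)) and form value a[x] = \<integral> \<mu> d<E(\<mu>)x,x>.\<close>

definition form_dom :: "(real set \<Rightarrow> 'h::complex_hilbert \<Rightarrow> 'h) \<Rightarrow> 'h set" where
  "form_dom E = {x. integrable (spec_meas E x) (\<lambda>t. t)}"

definition form_val :: "(real set \<Rightarrow> 'h::complex_hilbert \<Rightarrow> 'h) \<Rightarrow> 'h \<Rightarrow> real" where
  "form_val E x = integral\<^sup>L (spec_meas E x) (\<lambda>t. t)"

definition spec_subspace :: "(real set \<Rightarrow> 'h::complex_hilbert \<Rightarrow> 'h) \<Rightarrow> real set \<Rightarrow> 'h set" where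
  "spec_subspace E \<Delta> = range (E \<Delta>)"

definition opf_spectrum :: "(real \<Rightarrow> 'h::complex_hilbert op) \<Rightarrow> real set \<Rightarrow> real set" where
  "opf_spectrum T I = {l\<in>I. \<not> in_rho_op (T l) 0}"

definition opf_rho :: "(real \<Rightarrow> 'h::complex_hilbert op) \<Rightarrow> real set \<Rightarrow> real set" where
  "opf_rho T I = {l\<in>I. in_rho_op (T l) 0}"

definition opf_ess :: "(real \<Rightarrow> 'h::complex_hilbert op) \<Rightarrow> real set \<Rightarrow> real set" where
  "opf_ess T I = {l\<in>I. \<not> fredholm_op (T l)}"

definition opf_dis :: "(real \<Rightarrow> 'h::complex_hilbert op) \<Rightarrow> real set \<Rightarrow> real set" where
  "opf_dis T I = opf_spectrum T I - opf_ess T I"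

definition norm_resolvent_continuous :: "(real \<Rightarrow> 'h::complex_hilbert op) \<Rightarrow> real set \<Rightarrow> bool" where
  "norm_resolvent_continuous T I \<longleftrightarrow>
     (\<forall>z. Im z \<noteq> 0 \<longrightarrow> (\<forall>l\<in>I. in_rho_op (T l) z) \<and>
        (\<forall>l0\<in>I. ((\<lambda>l. onorm (\<lambda>x. resolvent_op (T l) z x - resolvent_op (T l0) z x))
                    \<longlongrightarrow> 0) (at l0 within I)))"

end

theory Submission imports Defs begin

locale pvm_loc =
  fixes E :: "real set \<Rightarrow> 'h::complex_hilbert \<Rightarrow> 'h"
  assumes pvm: "is_pvm E"
begin

lemma Elin: "S \<in> sets borel \<Longrightarrow> bounded_linear (E S)"
  using pvm unfolding is_pvm_def by blast
lemma Eidem: "S \<in> sets borel \<Longrightarrow> E S (E S x) = E S x"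
  using pvm unfolding is_pvm_def by blast
lemma Eself: "S \<in> sets borel \<Longrightarrow> inner (E S x) y = inner x (E S y)"
  using pvm unfolding is_pvm_def by blast
lemma EUNIV: "E UNIV x = x"
  using pvm unfolding is_pvm_def by blast
lemma Einter: "A \<in> sets borel \<Longrightarrow> B \<in> sets borel \<Longrightarrow> E (A \<inter> B) x = E A (E B x)"
  using pvm unfolding is_pvm_def by blast
lemma Ecadd: "range F \<subseteq> sets borel \<Longrightarrow> disjoint_family F \<Longrightarrow>
   (\<lambda>n. \<Sum>i<n. E (F i) x) \<longlonglongrightarrow> E (\<Union>i. F i) x"
  using pvm unfolding is_pvm_def by blast

lemma Eempty: "E {} x = 0"
proof -
  have L: "(\<lambda>n. \<Sum>i<n. E {} x) \<longlonglongrightarrow> E {} x"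
    using Ecadd[of "\<lambda>i::nat. {}" x] by (simp add: disjoint_family_on_def)
  have "(\<lambda>n. (\<Sum>i<Suc n. E {} x) - (\<Sum>i<n. E {} x)) \<longlonglongrightarrow> E {} x - E {} x"
    by (intro tendsto_diff L LIMSEQ_Suc[OF L])
  then have "(\<lambda>n. E {} x) \<longlonglongrightarrow> 0" by simp
  then show ?thesis using LIMSEQ_unique tendsto_const by blast
qed

lemma Eunion2:
  assumes A: "A \<in> sets borel" and B: "B \<in> sets borel" and d: "A \<inter> B = {}"
  shows "E (A \<union> B) x = E A x + E B x"
proof -
  define F where "F = (\<lambda>i::nat. if i = 0 then A else if i = 1 then B else {})"
  have "(\<lambda>n. \<Sum>i<n. E (F i) x) \<longlonglongrightarrow> E (\<Union>i. F i) x"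
    by (rule Ecadd) (use A B d in \<open>auto simp: F_def disjoint_family_on_def\<close>)
  moreover have "(\<Union>i. F i) = A \<union> B"
    unfolding F_def by (auto split: if_splits)
  ultimately have L: "(\<lambda>n. \<Sum>i<n. E (F i) x) \<longlonglongrightarrow> E (A \<union> B) x" by simp
  have S: "(\<Sum>i<n+2. E (F i) x) = E A x + E B x" for n
    by (induction n) (auto simp: F_def Eempty)
  have "(\<lambda>n. \<Sum>i<n+2. E (F i) x) \<longlonglongrightarrow> E (A \<union> B) x"
    using LIMSEQ_ignore_initial_segment[OF L, of 2] by (simp del: sum.lessThan_Suc)
  then have "(\<lambda>n. E A x + E B x) \<longlonglongrightarrow> E (A \<union> B) x" by (simp only: S)
  then show ?thesis using LIMSEQ_unique tendsto_const by blast
qed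

lemma Ecompl: "S \<in> sets borel \<Longrightarrow> E (- S) x = x - E S x"
  using Eunion2[of S "-S" x] by (simp add: EUNIV borel_comp algebra_simps)

lemma Enorm2: "S \<in> sets borel \<Longrightarrow> (norm (E S x))\<^sup>2 = inner (E S x) x"
  by (metis Eidem Eself power2_norm_eq_inner)

lemma Ele: "S \<in> sets borel \<Longrightarrow> norm (E S x) \<le> norm x"
proof -
  assume S: "S \<in> sets borel"
  have "(norm (E S x))\<^sup>2 \<le> norm (E S x) * norm x"
    using Enorm2[OF S, of x] Cauchy_Schwarz_ineq2[of "E S x" x] by simp
  then show ?thesis
    by (metis mult_le_cancel_left_pos norm_ge_zero not_le power2_eq_square zero_less_norm_iff
         le_less mult_zero_left order_le_less_trans)
qed

abbreviation mu where "mu x \<equiv> spec_meas E x"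

lemma sets_mu[simp]: "sets (mu x) = sets borel"
proof -
  have "sets (mu x) = sigma_sets UNIV (sets borel)"
    unfolding spec_meas_def by (rule sets_measure_of) simp
  also have "\<dots> = sets borel"
    using sets.sigma_sets_eq[of borel] by simp
  finally show ?thesis .
qed

lemma meas_mu: "f \<in> borel_measurable borel \<Longrightarrow> f \<in> borel_measurable (mu x)"
  using measurable_cong_sets[OF sets_mu refl] by blast

lemma space_mu[simp]: "space (mu x) = UNIV"
  by (simp add: spec_meas_def)

lemma emeasure_mu: assumes A: "A \<in> sets borel"
  shows "emeasure (mu x) A = ennreal ((norm (E A x))\<^sup>2)"
proof -
  have "emeasure (mu x) A = ennreal (inner (E A x) x)"
    unfolding spec_meas_def
  proof (rule emeasure_measure_of_sigma[OF _ _ _ A])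
    show "sigma_algebra UNIV (sets borel)"
      using sets.sigma_algebra_axioms[of borel] by simp
    show "positive (sets borel) (\<lambda>S. ennreal (inner (E S x) x))"
      by (simp add: positive_def Eempty)
    show "countably_additive (sets borel) (\<lambda>S. ennreal (inner (E S x) x))"
      unfolding countably_additive_def
    proof (intro allI impI)
      fix F :: "nat \<Rightarrow> real set"
      assume F: "range F \<subseteq> sets borel" "disjoint_family F" "\<Union> (range F) \<in> sets borel"
      have "(\<lambda>n. inner (\<Sum>i<n. E (F i) x) x) \<longlonglongrightarrow> inner (E (\<Union>i. F i) x) x"
        by (intro tendsto_inner Ecadd F tendsto_const)
      then have su: "(\<lambda>i. inner (E (F i) x) x) sums inner (E (\<Union>i. F i) x) x"
        unfolding sums_def by (simp add: inner_sum_left)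
      have nn: "0 \<le> inner (E (F i) x) x" for i
      proof -
        have "F i \<in> sets borel" using F(1) by auto
        from Enorm2[OF this, of x] show ?thesis by (metis zero_le_power2)
      qed
      show "(\<Sum>i. ennreal (inner (E (F i) x) x)) = ennreal (inner (E (\<Union> (range F)) x) x)"
        using suminf_ennreal2[OF nn sums_summable[OF su]] sums_unique[OF su] by simp
    qed
  qed
  then show ?thesis using Enorm2[OF A] by simp
qed

lemma finite_mu: "finite_measure (mu x)"
proof (rule finite_measureI)
  have "emeasure (mu x) UNIV = ennreal ((norm (E UNIV x))\<^sup>2)"
    by (rule emeasure_mu) simp
  then show "emeasure (mu x) (space (mu x)) \<noteq> \<infinity>" by simp
qed

lemma measure_mu: "A \<in> sets borel \<Longrightarrow> measure (mu x) A = (norm (E A x))\<^sup>2"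
  by (simp add: measure_def emeasure_mu)

lemma mu_density: assumes S: "S \<in> sets borel"
  shows "mu (E S x) = density (mu x) (\<lambda>t. ennreal (indicator S t))"
proof (rule measure_eqI)
  show "sets (mu (E S x)) = sets (density (mu x) (\<lambda>t. ennreal (indicator S t)))" by simp
  fix A assume "A \<in> sets (mu (E S x))"
  then have A: "A \<in> sets borel" by simp
  have "emeasure (density (mu x) (\<lambda>t. ennreal (indicator S t))) A
      = (\<integral>\<^sup>+ t. ennreal (indicator S t) * indicator A t \<partial>mu x)"
    using A S by (subst emeasure_density) (auto intro: meas_mu)
  also have "\<dots> = (\<integral>\<^sup>+ t. indicator (A \<inter> S) t \<partial>mu x)"
    by (intro nn_integral_cong) (simp split: split_indicator)
  also have "\<dots> = emeasure (mu x) (A \<inter> S)"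
    using A S by (subst nn_integral_indicator) auto
  also have "\<dots> = emeasure (mu (E S x)) A"
    using A S by (simp add: emeasure_mu Einter)
  finally show "emeasure (mu (E S x)) A = emeasure (density (mu x) (\<lambda>t. ennreal (indicator S t))) A" ..
qed

lemma integral_mu_E: assumes S: "S \<in> sets borel" and f[measurable]: "f \<in> borel_measurable borel"
  shows "integral\<^sup>L (mu (E S x)) (f::real\<Rightarrow>real) = (\<integral>t. indicator S t * f t \<partial>mu x)"
proof -
  have g: "(indicator S :: real \<Rightarrow> real) \<in> borel_measurable (mu x)"
    using S by (intro meas_mu) simp
  have f': "f \<in> borel_measurable (mu x)" 
    using f by (rule meas_mu)
  have nn: "AE t in mu x. 0 \<le> (indicator S t::real)" by (rule AE_I2) simp
  show ?thesis
    unfolding mu_density[OF S]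
    using integral_density[OF f' g nn] by (simp only: real_scaleR_def)
qed

lemma integrable_mu_E: assumes S: "S \<in> sets borel" and f[measurable]: "f \<in> borel_measurable borel"
  shows "integrable (mu (E S x)) (f::real\<Rightarrow>real) \<longleftrightarrow> integrable (mu x) (\<lambda>t. indicator S t * f t)"
proof -
  have g: "(indicator S :: real \<Rightarrow> real) \<in> borel_measurable (mu x)"
    using S by (intro meas_mu) simp
  have f': "f \<in> borel_measurable (mu x)" 
    using f by (rule meas_mu)
  have nn: "AE t in mu x. 0 \<le> (indicator S t::real)" by (rule AE_I2) simp
  show ?thesis
    unfolding mu_density[OF S]
    using integrable_density[OF f' g nn] by (simp only: real_scaleR_def)
qed

lemma AE_mu: assumes S: "S \<in> sets borel" and "E S x = 0"
  shows "AE t in mu x. t \<notin> S"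
proof (rule AE_I')
  have "emeasure (mu x) S = 0" using emeasure_mu[OF S, of x] assms(2) by simp
  then show "S \<in> null_sets (mu x)" using S by (simp add: null_sets_def)
  show "{t \<in> space (mu x). \<not> t \<notin> S} \<subseteq> S" by blast
qed


lemma int_E_zero: assumes S: "S \<in> sets borel" "E S x = 0"
  shows "measure (mu x) S = 0"
  using measure_mu[OF S(1)] S(2) by simp

lemma Eadd: "S \<in> sets borel \<Longrightarrow> E S (x + y) = E S x + E S y"
  using linear_add[OF bounded_linear.linear[OF Elin]] by blast

lemma Ediff: "S \<in> sets borel \<Longrightarrow> E S (x - y) = E S x - E S y"
  using linear_diff[OF bounded_linear.linear[OF Elin]] by blast

lemma Escale: "S \<in> sets borel \<Longrightarrow> E S (r *\<^sub>R x) = r *\<^sub>R E S x"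
  using linear_scale[OF bounded_linear.linear[OF Elin]] by blast

lemma E0: "S \<in> sets borel \<Longrightarrow> E S 0 = 0"
  using linear_0[OF bounded_linear.linear[OF Elin]] by blast

end

lemma perp_dense_zero:
  fixes v :: "'a::real_inner"
  assumes "closure D = UNIV" "\<forall>z\<in>D. inner v z = 0"
  shows "v = 0"
proof -
  have "closed {z. inner v z = 0}"
    by (intro closed_Collect_eq continuous_intros)
  then have "closure D \<subseteq> {z. inner v z = 0}"
    using assms(2) by (intro closure_minimal) auto
  then have "inner v v = 0" using assms(1) by blast
  then show ?thesis by simp
qed

lemma NB:
  fixes A :: "'a::real_inner \<Rightarrow> 'a"
  assumes V: "subspace V" and AV: "\<forall>u\<in>V. A u \<in> V"
    and add: "\<forall>u\<in>V. \<forall>v\<in>V. A (u + v) = A u + A v"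
    and scl: "\<forall>u\<in>V. \<forall>r. A (r *\<^sub>R u) = r *\<^sub>R A u"
    and sym: "\<forall>u\<in>V. \<forall>v\<in>V. inner (A u) v = inner u (A v)"
    and qb: "\<forall>u\<in>V. \<bar>inner (A u) u\<bar> \<le> e * (norm u)\<^sup>2"
    and e: "0 \<le> e" and x: "x \<in> V"
  shows "norm (A x) \<le> e * norm x"
proof -
  define y where "y = A x"
  have y: "y \<in> V" using AV x y_def by auto
  have key: "4 * s * (norm y)\<^sup>2 \<le> 2 * e * ((norm x)\<^sup>2 + s\<^sup>2 * (norm y)\<^sup>2)" for s :: real
  proof -
    define v where "v = s *\<^sub>R y"
    have v: "v \<in> V" using y V unfolding v_def by (simp add: subspace_scale)
    have p: "x + v \<in> V" and m: "x - v \<in> V" using x v V by (auto simp: subspace_add subspace_diff)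
    have Am: "A (x - v) = A x - A v"
    proof -
      have mv: "(-1) *\<^sub>R v \<in> V" using v V by (simp add: subspace_neg)
      have "A (x + (-1) *\<^sub>R v) = A x + A ((-1) *\<^sub>R v)"
        using add x mv by blast
      also have "A ((-1) *\<^sub>R v) = - A v" using scl v by (metis scaleR_minus1_left)
      finally show ?thesis by (metis scaleR_minus1_left diff_conv_add_uminus)
    qed
    have Ap: "A (x + v) = A x + A v" using add x v by simp
    have svx: "inner (A v) x = inner (A x) v"
      using sym x v by (simp add: inner_commute)
    have id: "inner (A (x + v)) (x + v) - inner (A (x - v)) (x - v) = 4 * inner (A x) v"
      unfolding Ap Am using svx by (simp add: inner_add inner_diff algebra_simps)
    have iv: "inner (A x) v = s * (norm y)\<^sup>2"
      unfolding v_def y_def by (simp add: power2_norm_eq_inner)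
    have b1: "inner (A (x + v)) (x + v) \<le> e * (norm (x + v))\<^sup>2"
      using qb p by fastforce
    have b2: "- inner (A (x - v)) (x - v) \<le> e * (norm (x - v))\<^sup>2"
      using qb m by fastforce
    have nid: "(norm (x + v))\<^sup>2 + (norm (x - v))\<^sup>2 = 2 * (norm x)\<^sup>2 + 2 * s\<^sup>2 * (norm y)\<^sup>2"
      unfolding v_def power2_norm_eq_inner
      by (simp add: inner_add inner_diff algebra_simps power2_eq_square)
    have "4 * inner (A x) v \<le> e * (norm (x + v))\<^sup>2 + e * (norm (x - v))\<^sup>2"
      using id b1 b2 by linarith
    also have "\<dots> = e * ((norm (x + v))\<^sup>2 + (norm (x - v))\<^sup>2)" by (simp add: distrib_left)
    also have "\<dots> = 2 * e * ((norm x)\<^sup>2 + s\<^sup>2 * (norm y)\<^sup>2)" unfolding nid by (simp add: algebra_simps)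
    finally show ?thesis unfolding iv by simp
  qed
  show ?thesis
  proof (cases "y = 0")
    case True then show ?thesis using e by (simp add: y_def)
  next
    case False
    then have ny: "norm y > 0" by simp
    have "4 * (norm x / norm y) * (norm y)\<^sup>2 \<le> 2 * e * ((norm x)\<^sup>2 + (norm x / norm y)\<^sup>2 * (norm y)\<^sup>2)"
      using key by blast
    then have "4 * norm x * norm y \<le> 4 * e * (norm x)\<^sup>2"
      using ny by (simp add: power2_eq_square field_simps)
    then have "norm x * norm y \<le> norm x * (e * norm x)"
      by (simp add: power2_eq_square algebra_simps)
    moreover have "norm x > 0"
    proof (rule ccontr)
      assume "\<not> norm x > 0"
      then have "x = 0" by simp
      then have "A x = A (0 *\<^sub>R x)" by simp
      also have "\<dots> = 0 *\<^sub>R A x" using scl x by blast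
      also have "\<dots> = 0" by simp
      finally show False using False y_def by simp
    qed
    ultimately show ?thesis unfolding y_def by simp
  qed
qed


lemma abs_le_1_sq: "\<bar>t::real\<bar> \<le> 1 + t\<^sup>2"
proof (cases "\<bar>t\<bar> \<le> 1")
  case True then show ?thesis by (simp add: add_increasing2)
next
  case False
  then have "\<bar>t\<bar> * 1 \<le> \<bar>t\<bar> * \<bar>t\<bar>" by (intro mult_left_mono) auto
  then show ?thesis by (simp add: power2_eq_square abs_mult_self_eq)
qed

locale sa_loc = pvm_loc E for E :: "real set \<Rightarrow> 'h::complex_hilbert \<Rightarrow> 'h" +
  fixes T :: "'h op"
  assumes sa: "self_adjoint_op T" and spm: "is_spectral_measure_of T E"
begin

lemma dom_iff: "x \<in> fst T \<longleftrightarrow> integrable (mu x) (\<lambda>t. t\<^sup>2)"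
  using spm unfolding is_spectral_measure_of_def by blast

lemma qf: "x \<in> fst T \<Longrightarrow> inner (snd T x) x = integral\<^sup>L (mu x) (\<lambda>t. t)"
  using spm unfolding is_spectral_measure_of_def by blast

lemma dsub: "subspace (fst T)"
  using sa unfolding self_adjoint_op_def clinear_op_def csubspace_def by blast

lemma Tadd: "x \<in> fst T \<Longrightarrow> y \<in> fst T \<Longrightarrow> snd T (x + y) = snd T x + snd T y"
  using sa unfolding self_adjoint_op_def clinear_op_def by blast

lemma Tscale: "x \<in> fst T \<Longrightarrow> snd T (r *\<^sub>R x) = r *\<^sub>R snd T x"
  using sa unfolding self_adjoint_op_def clinear_op_def by blast

lemma Tsym: "x \<in> fst T \<Longrightarrow> y \<in> fst T \<Longrightarrow> inner (snd T x) y = inner x (snd T y)"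
  using sa unfolding self_adjoint_op_def by blast

lemma dense: "closure (fst T) = UNIV"
  using sa unfolding self_adjoint_op_def by blast

lemma int_t: assumes x: "x \<in> fst T" shows "integrable (mu x) (\<lambda>t. t)"
proof -
  interpret finite_measure "mu x" by (rule finite_mu)
  have i2: "integrable (mu x) (\<lambda>t. t\<^sup>2)" using x dom_iff by simp
  have "integrable (mu x) (\<lambda>t. 1 + t\<^sup>2)"
    by (rule Bochner_Integration.integrable_add[OF integrable_const i2])
  moreover have "(\<lambda>t. t) \<in> borel_measurable (mu x)" by (rule meas_mu) simp
  moreover have "AE t in mu x. norm t \<le> norm (1 + t\<^sup>2)"
    by (rule AE_I2) (simp add: abs_le_1_sq)
  ultimately show ?thesis by (rule Bochner_Integration.integrable_bound)
qed

lemma dom_E: assumes S: "S \<in> sets borel" and x: "x \<in> fst T" shows "E S x \<in> fst T"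
proof -
  have "integrable (mu x) (\<lambda>t. indicator S t *\<^sub>R t\<^sup>2)"
    using x dom_iff S by (intro integrable_mult_indicator) auto
  then have "integrable (mu (E S x)) (\<lambda>t. t\<^sup>2)"
    using integrable_mu_E[OF S, of "\<lambda>t. t\<^sup>2" x] by simp
  then show ?thesis using dom_iff by simp
qed

lemma dom_bdd: assumes S: "S \<in> sets borel" and Sr: "S \<subseteq> {-r..r}" shows "E S y \<in> fst T"
proof -
  interpret finite_measure "mu y" by (rule finite_mu)
  have "integrable (mu y) (\<lambda>t. indicator S t * t\<^sup>2)"
  proof (rule Bochner_Integration.integrable_bound[of "mu y" "\<lambda>t. r\<^sup>2"])
    show "integrable (mu y) (\<lambda>t. r\<^sup>2)" by simp
    show "(\<lambda>t. indicator S t * t\<^sup>2) \<in> borel_measurable (mu y)" using S by (intro meas_mu) simp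
    show "AE t in mu y. norm (indicator S t * t\<^sup>2) \<le> norm (r\<^sup>2)"
    proof (rule AE_I2)
      fix t show "norm (indicator S t * t\<^sup>2) \<le> norm (r\<^sup>2)"
      proof (cases "t \<in> S")
        case True
        then have "t \<in> {-r..r}" using Sr by blast
        then have "\<bar>t\<bar> \<le> \<bar>r\<bar>" by auto
        then have "t\<^sup>2 \<le> r\<^sup>2" by (simp add: abs_le_square_iff)
        then show ?thesis using True by simp
      qed simp
    qed
  qed
  then have "integrable (mu (E S y)) (\<lambda>t. t\<^sup>2)"
    using integrable_mu_E[OF S, of "\<lambda>t. t\<^sup>2" y] by simp
  then show ?thesis using dom_iff by simp
qed


lemma INV: assumes I: "I \<in> sets borel" and x: "x \<in> fst T" and Ix: "E I x = x"
  shows "E I (snd T x) = snd T x"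
proof -
  have cI: "-I \<in> sets borel" using I by (rule borel_comp)
  have orth: "inner (snd T x) (E (-I) z) = 0" if z: "z \<in> fst T" for z
  proof -
    define z2 where "z2 = E (-I) z"
    have z2d: "z2 \<in> fst T" using dom_E[OF cI z] z2_def by simp
    have Iz2: "E I z2 = 0"
      unfolding z2_def using Einter[OF I cI, of z] by (simp add: Eempty)
    define w where "w = x + z2"
    have wd: "w \<in> fst T" using dsub x z2d by (simp add: w_def subspace_add)
    have Iw: "E I w = x" unfolding w_def using Eadd[OF I] Ix Iz2 by simp
    have cIw: "E (-I) w = z2" using Ecompl[OF I, of w] Iw by (simp add: w_def)
    have iw: "integrable (mu w) (\<lambda>t. t)" by (rule int_t[OF wd])
    have i1: "integrable (mu w) (\<lambda>t. indicator I t * t)"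
      using integrable_mult_indicator[of I "mu w" "\<lambda>t. t", OF _ iw] I by simp
    have i2: "integrable (mu w) (\<lambda>t. indicator (-I) t * t)"
      using integrable_mult_indicator[of "-I" "mu w" "\<lambda>t. t", OF _ iw] cI by simp
    have fe: "(\<lambda>t. t) = (\<lambda>t. indicator I t * t + indicator (-I) t * t)"
      by (auto simp: indicator_def fun_eq_iff)
    have "integral\<^sup>L (mu w) (\<lambda>t. t) = integral\<^sup>L (mu w) (\<lambda>t. indicator I t * t) + integral\<^sup>L (mu w) (\<lambda>t. indicator (-I) t * t)"
      by (subst fe) (rule Bochner_Integration.integral_add[OF i1 i2])
    also have "integral\<^sup>L (mu w) (\<lambda>t. indicator I t * t) = integral\<^sup>L (mu x) (\<lambda>t. t)"
      using integral_mu_E[OF I, of "\<lambda>t. t" w] Iw by simp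
    also have "integral\<^sup>L (mu w) (\<lambda>t. indicator (-I) t * t) = integral\<^sup>L (mu z2) (\<lambda>t. t)"
      using integral_mu_E[OF cI, of "\<lambda>t. t" w] cIw by simp
    finally have qq: "inner (snd T w) w = inner (snd T x) x + inner (snd T z2) z2"
      using qf[OF wd] qf[OF x] qf[OF z2d] by simp
    have "inner (snd T w) w = inner (snd T x) x + inner (snd T z2) z2 + inner (snd T x) z2 + inner (snd T z2) x"
      unfolding w_def Tadd[OF x z2d] by (simp add: inner_add algebra_simps)
    moreover have "inner (snd T z2) x = inner (snd T x) z2"
      using Tsym[OF z2d x] by (simp add: inner_commute)
    ultimately have "inner (snd T x) z2 = 0" using qq by simp
    then show ?thesis by (simp add: z2_def)
  qed
  define v where "v = E (-I) (snd T x)"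
  have "\<forall>z\<in>fst T. inner v z = 0"
    using orth Eself[OF cI] by (simp add: v_def)
  then have "v = 0" by (rule perp_dense_zero[OF dense])
  then show ?thesis using Ecompl[OF I, of "snd T x"] by (simp add: v_def)
qed


lemma mu_total: "measure (mu u) (space (mu u)) = (norm u)\<^sup>2"
  using measure_mu[of UNIV u] by (simp add: EUNIV)

lemma APPROX: assumes e: "0 \<le> e" and u: "E {t-e..t+e} u = u"
  shows "u \<in> fst T \<and> norm (snd T u - t *\<^sub>R u) \<le> e * norm u"
proof -
  define I where "I = {t-e..t+e}"
  have I: "I \<in> sets borel" unfolding I_def by simp
  have cI: "-I \<in> sets borel" using I by (rule borel_comp)
  define V where "V = {u. E I u = u}"
  have Vd: "v \<in> fst T" if "v \<in> V" for v
  proof -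
    have "I \<subseteq> {-(\<bar>t\<bar>+e)..\<bar>t\<bar>+e}" unfolding I_def by auto
    from dom_bdd[OF I this, of v] that show ?thesis by (simp add: V_def)
  qed
  have V: "subspace V"
    unfolding subspace_def V_def using Eadd[OF I] Escale[OF I] E0[OF I] by auto
  define A where "A = (\<lambda>v. snd T v - t *\<^sub>R v)"
  have AV: "\<forall>v\<in>V. A v \<in> V"
    using INV[OF I] Vd unfolding V_def A_def by (auto simp: Ediff[OF I] Escale[OF I])
  have add: "\<forall>v\<in>V. \<forall>w\<in>V. A (v + w) = A v + A w"
    using Tadd Vd unfolding A_def by (auto simp: algebra_simps)
  have scl: "\<forall>v\<in>V. \<forall>r. A (r *\<^sub>R v) = r *\<^sub>R A v"
    using Tscale Vd unfolding A_def by (auto simp: algebra_simps)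
  have sym: "\<forall>v\<in>V. \<forall>w\<in>V. inner (A v) w = inner v (A w)"
    using Tsym Vd unfolding A_def by (auto simp: inner_diff algebra_simps)
  have qb: "\<forall>v\<in>V. \<bar>inner (A v) v\<bar> \<le> e * (norm v)\<^sup>2"
  proof
    fix v assume v: "v \<in> V"
    interpret finite_measure "mu v" by (rule finite_mu)
    have vd: "v \<in> fst T" using Vd v .
    have iv: "integrable (mu v) (\<lambda>s. s)" by (rule int_t[OF vd])
    have "E (-I) v = 0" using Ecompl[OF I, of v] v by (simp add: V_def)
    then have ae: "AE s in mu v. s \<in> I" using AE_mu[OF cI] by simp
    have "inner (A v) v = integral\<^sup>L (mu v) (\<lambda>s. s) - t * (norm v)\<^sup>2"
      unfolding A_def using qf[OF vd] by (simp add: inner_diff power2_norm_eq_inner)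
    also have "\<dots> = integral\<^sup>L (mu v) (\<lambda>s. s - t)"
      using Bochner_Integration.integral_diff[OF iv integrable_const[of t]] mu_total[of v] by simp
    finally have eq: "inner (A v) v = integral\<^sup>L (mu v) (\<lambda>s. s - t)" .
    have id: "integrable (mu v) (\<lambda>s. s - t)"
      using Bochner_Integration.integrable_diff[OF iv integrable_const[of t]] .
    have "integral\<^sup>L (mu v) (\<lambda>s. s - t) \<le> integral\<^sup>L (mu v) (\<lambda>s. e)"
      by (rule integral_mono_AE[OF id integrable_const]) (use ae in \<open>auto simp: I_def\<close>)
    moreover have "integral\<^sup>L (mu v) (\<lambda>s. - e) \<le> integral\<^sup>L (mu v) (\<lambda>s. s - t)"
      by (rule integral_mono_AE[OF integrable_const id]) (use ae in \<open>auto simp: I_def\<close>)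
    ultimately show "\<bar>inner (A v) v\<bar> \<le> e * (norm v)\<^sup>2"
      unfolding eq using mu_total[of v] by (simp add: algebra_simps)
  qed
  have uV: "u \<in> V" using u by (simp add: V_def I_def)
  show ?thesis using NB[OF V AV add scl sym qb e uV] Vd[OF uV] by (simp add: A_def)
qed

lemma KER: assumes "E {0} u = u" shows "u \<in> fst T \<and> snd T u = 0"
  using APPROX[of 0 0 u] assms by simp


lemma E_zero_iff: assumes A: "A \<in> sets borel" shows "E A y = 0 \<longleftrightarrow> emeasure (mu y) A = 0"
  using emeasure_mu[OF A, of y] by simp

lemma E_zero_null: assumes A: "A \<in> sets borel" shows "E A y = 0 \<longleftrightarrow> A \<in> null_sets (mu y)"
  using E_zero_iff[OF A] A by (simp add: null_sets_def)

lemma BB: assumes "bounded_below_op T" shows "\<exists>m\<le>0. \<forall>y. E {..<m} y = 0"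
proof -
  obtain c where c: "\<forall>x\<in>fst T. c * (norm x)\<^sup>2 \<le> inner (snd T x) x"
    using assms unfolding bounded_below_op_def by blast
  define m where "m = min 0 (c - 1)"
  have zk: "E {-real k..<m} y = 0" for k y
  proof -
    define Ik where "Ik = {-real k..<m}"
    have Ik: "Ik \<in> sets borel" unfolding Ik_def by simp
    have cIk: "-Ik \<in> sets borel" using Ik by (rule borel_comp)
    define u where "u = E Ik y"
    have "Ik \<subseteq> {-(real k + \<bar>m\<bar>)..real k + \<bar>m\<bar>}" unfolding Ik_def by auto
    from dom_bdd[OF Ik this, of y] have ud: "u \<in> fst T" by (simp add: u_def)
    interpret finite_measure "mu u" by (rule finite_mu)
    have "E (-Ik) u = 0" unfolding u_def using Einter[OF cIk Ik, of y] by (simp add: Eempty)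
    then have ae: "AE s in mu u. s \<in> Ik" using AE_mu[OF cIk] by simp
    have "integral\<^sup>L (mu u) (\<lambda>s. s) \<le> integral\<^sup>L (mu u) (\<lambda>s. m)"
      by (rule integral_mono_AE[OF int_t[OF ud] integrable_const]) (use ae in \<open>auto simp: Ik_def\<close>)
    moreover have "c * (norm u)\<^sup>2 \<le> inner (snd T u) u" using c ud by blast
    ultimately have "c * (norm u)\<^sup>2 \<le> m * (norm u)\<^sup>2"
      using qf[OF ud] mu_total[of u] by (simp add: mult.commute)
    moreover have "m < c" unfolding m_def by simp
    ultimately have cm: "(c - m) * (norm u)\<^sup>2 \<le> 0" and cm0: "c - m > 0"
      by (simp_all add: left_diff_distrib)
    have "(norm u)\<^sup>2 \<le> 0"
    proof (rule ccontr)
      assume "\<not> (norm u)\<^sup>2 \<le> 0"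
      then have "(c - m) * (norm u)\<^sup>2 > 0" using cm0 by (intro mult_pos_pos) auto
      then show False using cm by simp
    qed
    then show ?thesis by (simp add: u_def Ik_def)
  qed
  have "{..<m} = (\<Union>k. {-real k..<m})"
  proof -
    have "s \<in> (\<Union>k. {-real k..<m})" if "s < m" for s
    proof -
      obtain k where "-s \<le> real k" using real_arch_simple by blast
      then have "s \<in> {-real k..<m}" using that by simp
      then show ?thesis by blast
    qed
    then show ?thesis by auto
  qed
  moreover have "(\<Union>k. {-real k..<m}) \<in> null_sets (mu y)" for y
    using zk E_zero_null by (intro null_sets_UN) auto
  ultimately have "\<forall>y. E {..<m} y = 0" using E_zero_null by auto
  then show ?thesis by (intro exI[of _ m]) (simp add: m_def)
qed

lemma GAP: assumes rho: "\<forall>t\<in>{0<..<\<delta>}. in_rho_op T (complex_of_real t)"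
  shows "E {0<..<\<delta>} y = 0"
proof -
  have loc: "\<exists>\<epsilon>>0. \<forall>y. E {t-\<epsilon>..t+\<epsilon>} y = 0" if t: "t \<in> {0<..<\<delta>}" for t
  proof -
    obtain B where B: "resolvent_inv T (complex_of_real t) B"
      using rho t unfolding in_rho_op_def by blast
    have Bl: "bounded_linear B" and Binv: "\<forall>x\<in>fst T. B (snd T x - cscale (complex_of_real t) x) = x"
      using B unfolding resolvent_inv_def by auto
    obtain K where K: "K > 0" "\<forall>z. norm (B z) \<le> norm z * K"
      using bounded_linear.pos_bounded[OF Bl] by blast
    define \<epsilon> where "\<epsilon> = 1 / (2 * K)"
    have ep: "\<epsilon> > 0" using K by (simp add: \<epsilon>_def)
    have "E {t-\<epsilon>..t+\<epsilon>} y = 0" for y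
    proof -
      define u where "u = E {t-\<epsilon>..t+\<epsilon>} y"
      have "E {t-\<epsilon>..t+\<epsilon>} u = u" unfolding u_def by (simp add: Eidem)
      from APPROX[OF less_imp_le[OF ep] this]
      have ud: "u \<in> fst T" and ap: "norm (snd T u - t *\<^sub>R u) \<le> \<epsilon> * norm u" by auto
      have cs: "cscale (complex_of_real t) u = t *\<^sub>R u" by (simp add: cscale_def)
      have "B (snd T u - t *\<^sub>R u) = u" using Binv ud cs by metis
      then have "norm u = norm (B (snd T u - t *\<^sub>R u))" by simp
      also have "\<dots> \<le> norm (snd T u - t *\<^sub>R u) * K" using K by blast
      also have "\<dots> \<le> \<epsilon> * norm u * K" using ap K by (simp add: mult_right_mono)
      also have "\<dots> = norm u / 2" using K by (simp add: \<epsilon>_def field_simps)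
      finally have "norm u \<le> norm u / 2" .
      then show ?thesis by (simp add: u_def)
    qed
    then show ?thesis using ep by blast
  qed
  define F where "F = {U::real set. open U \<and> U \<in> null_sets (mu y)}"
  obtain F' where F': "F' \<subseteq> F" "countable F'" "\<Union>F' = \<Union>F"
    using Lindelof[of F] unfolding F_def by blast
  have "{0<..<\<delta>} \<subseteq> \<Union>F"
  proof
    fix t assume t: "t \<in> {0<..<\<delta>}"
    obtain \<epsilon> where ep: "\<epsilon> > 0" "\<forall>y. E {t-\<epsilon>..t+\<epsilon>} y = 0" using loc[OF t] by blast
    have "{t-\<epsilon>..t+\<epsilon>} \<in> null_sets (mu y)" using ep E_zero_null[of "{t-\<epsilon>..t+\<epsilon>}"] by simp
    then have "{t-\<epsilon><..<t+\<epsilon>} \<in> null_sets (mu y)"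
      by (rule null_sets_subset) auto
    then have "{t-\<epsilon><..<t+\<epsilon>} \<in> F" unfolding F_def by simp
    moreover have "t \<in> {t-\<epsilon><..<t+\<epsilon>}" using ep by simp
    ultimately show "t \<in> \<Union>F" by blast
  qed
  moreover have "\<Union>F' \<in> null_sets (mu y)"
  proof -
    have "\<And>U. U \<in> F' \<Longrightarrow> U \<in> null_sets (mu y)" using F'(1) unfolding F_def by blast
    from null_sets_UN'[OF F'(2), of "\<lambda>U. U" "mu y"] this show ?thesis by simp
  qed
  ultimately have sub: "{0<..<\<delta>} \<subseteq> \<Union>F'" and nul: "\<Union>F' \<in> null_sets (mu y)"
    using F'(3) by simp_all
  have "{0<..<\<delta>} \<in> null_sets (mu y)"
    by (rule null_sets_subset[OF nul _ sub]) simp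
  then show ?thesis using E_zero_null[of "{0<..<\<delta>}"] by simp
qed

end


lemma compact_boxsum:
  fixes U :: "'a::real_normed_vector set"
  assumes "finite U"
  shows "compact {(\<Sum>c\<in>U. a c *\<^sub>R c) | a. \<forall>c\<in>U. \<bar>a c\<bar> \<le> M}"
  using assms
proof (induction U rule: finite_induct)
  case empty
  then show ?case by simp
next
  case (insert e U)
  have eq: "{(\<Sum>c\<in>insert e U. a c *\<^sub>R c) | a. \<forall>c\<in>insert e U. \<bar>a c\<bar> \<le> M}
     = {x + y | x y. x \<in> (\<lambda>t. t *\<^sub>R e) ` {-M..M} \<and> y \<in> {(\<Sum>c\<in>U. a c *\<^sub>R c) | a. \<forall>c\<in>U. \<bar>a c\<bar> \<le> M}}"
  proof (intro set_eqI iffI)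
    fix z assume "z \<in> {(\<Sum>c\<in>insert e U. a c *\<^sub>R c) | a. \<forall>c\<in>insert e U. \<bar>a c\<bar> \<le> M}"
    then obtain a where a: "z = (\<Sum>c\<in>insert e U. a c *\<^sub>R c)" "\<forall>c\<in>insert e U. \<bar>a c\<bar> \<le> M" by blast
    have "z = a e *\<^sub>R e + (\<Sum>c\<in>U. a c *\<^sub>R c)" using a(1) insert by simp
    moreover have "a e \<in> {-M..M}" using a(2) by auto
    ultimately show "z \<in> {x + y | x y. x \<in> (\<lambda>t. t *\<^sub>R e) ` {-M..M} \<and> y \<in> {(\<Sum>c\<in>U. a c *\<^sub>R c) | a. \<forall>c\<in>U. \<bar>a c\<bar> \<le> M}}"
      using a(2) by blast
  next
    fix z assume "z \<in> {x + y | x y. x \<in> (\<lambda>t. t *\<^sub>R e) ` {-M..M} \<and> y \<in> {(\<Sum>c\<in>U. a c *\<^sub>R c) | a. \<forall>c\<in>U. \<bar>a c\<bar> \<le> M}}"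
    then obtain t a where ta: "z = t *\<^sub>R e + (\<Sum>c\<in>U. a c *\<^sub>R c)" "t \<in> {-M..M}" "\<forall>c\<in>U. \<bar>a c\<bar> \<le> M"
      by blast
    define a' where "a' = a(e := t)"
    have "(\<Sum>c\<in>U. a' c *\<^sub>R c) = (\<Sum>c\<in>U. a c *\<^sub>R c)"
      using insert(2) by (intro sum.cong) (auto simp: a'_def)
    then have "z = (\<Sum>c\<in>insert e U. a' c *\<^sub>R c)" using ta(1) insert by (simp add: a'_def)
    moreover have "\<forall>c\<in>insert e U. \<bar>a' c\<bar> \<le> M" using ta(2,3) by (auto simp: a'_def)
    ultimately show "z \<in> {(\<Sum>c\<in>insert e U. a c *\<^sub>R c) | a. \<forall>c\<in>insert e U. \<bar>a c\<bar> \<le> M}" by blast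
  qed
  have "compact ((\<lambda>t. t *\<^sub>R e) ` {-M..M})"
    by (intro compact_continuous_image continuous_intros) simp
  then show ?case unfolding eq by (intro compact_sums insert.IH)
qed

lemma fin_span_compact:
  fixes F :: "'a::real_inner set"
  assumes F: "finite F" and KF: "K \<subseteq> span F" and Kc: "closed K" and Kb: "bounded K"
  shows "compact K"
proof -
  obtain C where C: "finite C" "span C = span F" "pairwise orthogonal C"
    using basis_orthogonal[OF F] by blast
  define C0 where "C0 = C - {0}"
  have C0: "finite C0" "span C0 = span F" "pairwise orthogonal C0" "0 \<notin> C0"
    using C unfolding C0_def by (auto simp: pairwise_def)
  obtain R where R: "\<forall>k\<in>K. norm k \<le> R" using Kb bounded_iff by blast
  define r where "r = (\<Sum>c\<in>C0. 1 / norm c)"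
  have rc: "1 / norm c \<le> r" if "c \<in> C0" for c
    unfolding r_def using that C0(1) by (intro member_le_sum) auto
  define M where "M = R * r"
  have sub: "K \<subseteq> {(\<Sum>c\<in>C0. a c *\<^sub>R c) | a. \<forall>c\<in>C0. \<bar>a c\<bar> \<le> M}"
  proof
    fix k assume k: "k \<in> K"
    then have "k \<in> span C0" using KF C0(2) by auto
    then obtain a where a: "k = (\<Sum>c\<in>C0. a c *\<^sub>R c)"
      using span_finite[OF C0(1)] by auto
    have "\<bar>a c\<bar> \<le> M" if c: "c \<in> C0" for c
    proof -
      have "inner k c = (\<Sum>d\<in>C0. a d * inner d c)"
        unfolding a by (simp add: inner_sum_left)
      also have "\<dots> = a c * inner c c"
      proof (subst sum.remove[OF C0(1) c])
        have "(\<Sum>d\<in>C0 - {c}. a d * inner d c) = 0"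
          using C0(3) c unfolding pairwise_def orthogonal_def by (intro sum.neutral) auto
        then show "a c * inner c c + (\<Sum>d\<in>C0 - {c}. a d * inner d c) = a c * inner c c" by simp
      qed
      finally have "\<bar>a c\<bar> * (norm c * norm c) = \<bar>inner k c\<bar>"
        by (simp add: abs_mult power2_norm_eq_inner[symmetric] power2_eq_square)
      also have "\<dots> \<le> norm k * norm c" by (rule Cauchy_Schwarz_ineq2)
      finally have cs: "(\<bar>a c\<bar> * norm c) * norm c \<le> norm k * norm c" by (simp add: mult.assoc)
      have nc: "norm c > 0" using C0(4) c by auto
      have "\<bar>a c\<bar> * norm c \<le> norm k" using cs nc by simp
      then have "\<bar>a c\<bar> \<le> norm k * (1 / norm c)"
        using nc by (simp add: field_simps mult.commute)
      also have "\<dots> \<le> R * r"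
        using R k rc[OF c] by (intro mult_mono) (auto intro: order_trans[OF norm_ge_zero])
      finally show ?thesis by (simp add: M_def)
    qed
    then show "k \<in> {(\<Sum>c\<in>C0. a c *\<^sub>R c) | a. \<forall>c\<in>C0. \<bar>a c\<bar> \<le> M}"
      using a by blast
  qed
  have "compact ({(\<Sum>c\<in>C0. a c *\<^sub>R c) | a. \<forall>c\<in>C0. \<bar>a c\<bar> \<le> M} \<inter> K)"
    by (intro compact_Int_closed compact_boxsum C0(1) Kc)
  moreover have "{(\<Sum>c\<in>C0. a c *\<^sub>R c) | a. \<forall>c\<in>C0. \<bar>a c\<bar> \<le> M} \<inter> K = K"
    using sub by blast
  ultimately show ?thesis by simp
qed


context pvm_loc
begin

lemma closed_sum:
  assumes S: "S \<in> sets borel" and H: "subspace H" "closed H"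
    and c: "c > 0" "\<forall>x\<in>H. c * norm x \<le> norm (E (-S) x)"
  shows "closed {x + y |x y. x \<in> H \<and> y \<in> range (E S)}"
proof -
  have cS: "-S \<in> sets borel" using S by (rule borel_comp)
  define Q where "Q = E (-S)"
  have Ql: "bounded_linear Q" unfolding Q_def by (rule Elin[OF cS])
  have eq: "{x + y |x y. x \<in> H \<and> y \<in> range (E S)} = Q -` (Q ` H)"
  proof (intro set_eqI iffI)
    fix z assume "z \<in> {x + y |x y. x \<in> H \<and> y \<in> range (E S)}"
    then obtain x y' where xy: "z = x + E S y'" "x \<in> H" by blast
    have "Q (E S y') = 0" unfolding Q_def using Einter[OF cS S, of y'] by (simp add: Eempty)
    then have "Q z = Q x" unfolding xy(1) Q_def using Eadd[OF cS] by (simp add: Q_def)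
    then show "z \<in> Q -` (Q ` H)" using xy(2) by blast
  next
    fix z assume "z \<in> Q -` (Q ` H)"
    then obtain x where x: "x \<in> H" "Q z = Q x" by blast
    define y where "y = z - x"
    have "Q y = 0" unfolding y_def Q_def using Ediff[OF cS] x(2) by (simp add: Q_def)
    then have "E S y = y" using Ecompl[OF S, of y] unfolding Q_def by simp
    then have "y \<in> range (E S)" by (metis rangeI)
    moreover have "z = x + y" by (simp add: y_def)
    ultimately show "z \<in> {x + y |x y. x \<in> H \<and> y \<in> range (E S)}" using x(1) by blast
  qed
  have "complete H" using H(2) complete_eq_closed by blast
  then have "complete (Q ` H)"
    using complete_isometric_image[OF c(1) H(1) Ql] c(2) unfolding Q_def by blast
  then have "closed (Q ` H)" by (rule complete_imp_closed)
  then have "closed (Q -` (Q ` H))"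
    by (rule continuous_closed_vimage) (rule linear_continuous_at[OF Ql])
  then show ?thesis unfolding eq .
qed

end

theorem lemma4p4:
  fixes T :: "real \<Rightarrow> 'h::complex_hilbert op"
    and E :: "real \<Rightarrow> real set \<Rightarrow> 'h \<Rightarrow> 'h"
    and \<D> H1 :: "'h set"
    and \<alpha> \<beta> a b \<delta> :: real
  assumes "\<alpha> < \<beta>"
    and A1: "\<forall>l\<in>{\<alpha>..\<beta>}. self_adjoint_op (T l) \<and> is_spectral_measure_of (T l) (E l)"
    and A2: "\<forall>l\<in>{\<alpha>..\<beta>}. form_dom (E l) = \<D>"
    and A3: "\<forall>x\<in>\<D> - {0}. continuous_on {\<alpha>..\<beta>} (\<lambda>l. form_val (E l) x) \<and>
              (\<forall>l0\<in>{\<alpha>..\<beta>}. form_val (E l0) x = 0 \<longrightarrow>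
                 (\<forall>l\<in>{\<alpha>..\<beta>}. l < l0 \<longrightarrow> form_val (E l) x > 0) \<and>
                 (\<forall>l\<in>{\<alpha>..\<beta>}. l > l0 \<longrightarrow> form_val (E l) x < 0))"
    and "norm_resolvent_continuous T {\<alpha>..\<beta>}"
    and "\<forall>l\<in>{\<alpha>..\<beta>}. bounded_below_op (T l)"
    and "\<alpha> \<in> opf_rho T {\<alpha>..\<beta>}" and "\<beta> \<in> opf_rho T {\<alpha>..\<beta>}"
    and "finite (opf_spectrum T {\<alpha>..\<beta>} \<inter> {\<alpha><..<\<beta>})"
    and "opf_spectrum T {\<alpha>..\<beta>} \<inter> {\<alpha><..<\<beta>} \<subseteq> opf_dis T {\<alpha>..\<beta>}"
    and "a \<in> {\<alpha>..\<beta>}" and "b \<in> {\<alpha>..\<beta>}" and "a < b"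
    and "csubspace H1" and "closed H1" and "H1 \<subseteq> \<D>"
    and "\<forall>x\<in>H1. form_val (E a) x \<le> 0"
    and "\<delta> > 0" and "\<forall>t\<in>{0<..<\<delta>}. in_rho_op (T b) (complex_of_real t)"
  shows "H1 \<inter> spec_subspace (E b) {0<..} = {0} \<and>
         closed {x + y |x y. x \<in> H1 \<and> y \<in> spec_subspace (E b) {0<..}} \<and>
         H1 \<inter> spec_subspace (E b) {0..} = {0} \<and>
         closed {x + y |x y. x \<in> H1 \<and> y \<in> spec_subspace (E b) {0..}}"
proof -
  note as = assms
  have bI: "b \<in> {\<alpha>..\<beta>}" by (rule as(12))
  have sab: "self_adjoint_op (T b)" and spb: "is_spectral_measure_of (T b) (E b)" using A1 bI by auto
  have pvmb: "is_pvm (E b)" using spb unfolding is_spectral_measure_of_def by blast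
  interpret P: sa_loc "E b" "T b"
    by (intro sa_loc.intro pvm_loc.intro sa_loc_axioms.intro pvmb sab spb)
  have Dd: "\<D> = {x. integrable (spec_meas (E b) x) (\<lambda>t. t)}" using A2 bI unfolding form_dom_def by auto
  have H1sub: "subspace H1" using as(14) unfolding csubspace_def by blast
  obtain m where m: "m \<le> 0" "\<forall>y. E b {..<m} y = 0" using P.BB as(6) bI by blast
  have gap: "E b {0<..<\<delta>} y = 0" for y using P.GAP as(19) by blast

  have FV: "form_val (E b) x < 0" if x: "x \<in> H1" "x \<noteq> 0" for x
  proof -
    define f where "f = (\<lambda>l. form_val (E l) x)"
    have xD: "x \<in> \<D> - {0}" using x as(16) by auto
    have cont: "continuous_on {\<alpha>..\<beta>} f" using A3 xD unfolding f_def by blast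
    have sg: "\<forall>l0\<in>{\<alpha>..\<beta>}. f l0 = 0 \<longrightarrow> (\<forall>l\<in>{\<alpha>..\<beta>}. l < l0 \<longrightarrow> f l > 0) \<and> (\<forall>l\<in>{\<alpha>..\<beta>}. l > l0 \<longrightarrow> f l < 0)"
      using A3 xD unfolding f_def by blast
    have fa: "f a \<le> 0" using as(17) x unfolding f_def by blast
    show ?thesis
    proof (rule ccontr)
      assume "\<not> form_val (E b) x < 0"
      then have fb: "0 \<le> f b" unfolding f_def by simp
      have "{a..b} \<subseteq> {\<alpha>..\<beta>}" using as(11,12) by auto
      then have "continuous_on {a..b} f" using cont continuous_on_subset by blast
      then obtain l where l: "a \<le> l" "l \<le> b" "f l = 0" using IVT'[of f a 0 b] fa fb as(13) by auto
      have lI: "l \<in> {\<alpha>..\<beta>}" using l as(11,12) by auto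
      show False
      proof (cases "l < b")
        case True
        then have "f b < 0" using sg lI l(3) bI by blast
        then show False using fb by simp
      next
        case False
        then have "a < l" using l as(13) by simp
        then have "f a > 0" using sg lI l(3) as(11) by blast
        then show False using fa by simp
      qed
    qed
  qed

  have FB: "m * (norm (E b {..<0} x))\<^sup>2 + \<delta> * (norm (E b {0<..} x))\<^sup>2 \<le> form_val (E b) x"
    if xD: "x \<in> \<D>" for x
  proof -
    interpret finite_measure "spec_meas (E b) x" by (rule P.finite_mu)
    define g where "g = (\<lambda>t::real. m * indicator {..<0} t + \<delta> * indicator {0<..} t)"
    have ii1: "integrable (spec_meas (E b) x) (indicator {..<(0::real)} :: real \<Rightarrow> real)"
      by (rule integrable_real_indicator) (simp_all add: P.emeasure_mu)
    have ii2: "integrable (spec_meas (E b) x) (indicator {(0::real)<..} :: real \<Rightarrow> real)"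
      by (rule integrable_real_indicator) (simp_all add: P.emeasure_mu)
    have ig: "integrable (spec_meas (E b) x) g"
      unfolding g_def using ii1 ii2 by simp
    have "integral\<^sup>L (spec_meas (E b) x) g
       = m * measure (spec_meas (E b) x) {..<0} + \<delta> * measure (spec_meas (E b) x) {0<..}"
      unfolding g_def using ii1 ii2 by simp
    also have "\<dots> = m * (norm (E b {..<0} x))\<^sup>2 + \<delta> * (norm (E b {0<..} x))\<^sup>2"
      by (simp add: P.measure_mu)
    finally have ieq: "integral\<^sup>L (spec_meas (E b) x) g = m * (norm (E b {..<0} x))\<^sup>2 + \<delta> * (norm (E b {0<..} x))\<^sup>2" .
    have ae1: "AE t in spec_meas (E b) x. t \<notin> {..<m}" using P.AE_mu[of "{..<m}" x] m(2) by simp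
    have ae2: "AE t in spec_meas (E b) x. t \<notin> {0<..<\<delta>}" using P.AE_mu[of "{0<..<\<delta>}" x] gap by simp
    have "AE t in spec_meas (E b) x. g t \<le> t"
      using ae1 ae2
    proof eventually_elim
      case (elim t)
      then show ?case using m(1) as(18) unfolding g_def
        by (cases "t < 0"; cases "t = 0") (auto simp: not_less)
    qed
    then have "integral\<^sup>L (spec_meas (E b) x) g \<le> integral\<^sup>L (spec_meas (E b) x) (\<lambda>t. t)"
      using xD Dd by (intro integral_mono_AE[OF ig]) auto
    then show ?thesis unfolding ieq form_val_def .
  qed

  have FK: "form_val (E b) k = 0" if k: "E b {0} k = k" for k
  proof -
    have "E b (-{0}) k = 0" using P.Ecompl[of "{0}" k] k by simp
    then have ae0: "AE t in spec_meas (E b) k. t \<notin> -{0}" using P.AE_mu[of "-{0}" k] by simp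
    have ae: "AE t in spec_meas (E b) k. t = 0" using ae0 by eventually_elim simp
    have "integral\<^sup>L (spec_meas (E b) k) (\<lambda>t. t) = integral\<^sup>L (spec_meas (E b) k) (\<lambda>t. 0)"
      by (rule integral_cong_AE) (auto intro: P.meas_mu simp: ae)
    then show ?thesis by (simp add: form_val_def)
  qed

  have DS: "H1 \<inter> range (E b S) = {0}" if S: "S \<in> sets borel" "S \<inter> {..<0} = {}" for S
  proof
    show "H1 \<inter> range (E b S) \<subseteq> {0}"
    proof
      fix x assume x: "x \<in> H1 \<inter> range (E b S)"
      then obtain y where y: "x = E b S y" by blast
      have "E b {..<0} x = E b ({..<0} \<inter> S) y" unfolding y by (simp add: P.Einter S(1))
      also have "\<dots> = 0" using S(2) by (simp add: Int_commute P.Eempty)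
      finally have "E b {..<0} x = 0" .
      moreover have "x \<in> \<D>" using x as(16) by blast
      ultimately have "\<delta> * (norm (E b {0<..} x))\<^sup>2 \<le> form_val (E b) x"
        using FB[of x] by simp
      moreover have "0 \<le> \<delta> * (norm (E b {0<..} x))\<^sup>2" using as(18) by simp
      ultimately have "0 \<le> form_val (E b) x" by linarith
      then show "x \<in> {0}" using FV[of x] x by (cases "x = 0") auto
    qed
    show "{0} \<subseteq> H1 \<inter> range (E b S)"
    proof -
      have "0 \<in> range (E b S)" using P.E0[OF S(1)] by (metis rangeI)
      then show ?thesis using H1sub by (simp add: subspace_0)
    qed
  qed

  have b0: "{0::real} \<in> sets borel" by simp
  obtain F where F: "finite F" "range (E b {0}) \<subseteq> span F"
  proof (cases "in_rho_op (T b) 0")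
    case True
    then obtain B where B: "resolvent_inv (T b) 0 B" unfolding in_rho_op_def by blast
    have Bl: "bounded_linear B" and Binv: "\<forall>x\<in>fst (T b). B (snd (T b) x - cscale 0 x) = x"
      using B unfolding resolvent_inv_def by auto
    have "range (E b {0}) \<subseteq> span {}"
    proof
      fix u assume "u \<in> range (E b {0})"
      then obtain y where y: "u = E b {0} y" by blast
      have "E b {0} u = u" unfolding y using P.Eidem[OF b0] by simp
      from P.KER[OF this] have ud: "u \<in> fst (T b)" and Tu: "snd (T b) u = 0" by auto
      have "B (snd (T b) u) = u" using Binv ud by (simp add: cscale_def)
      then have "B 0 = u" using Tu by simp
      moreover have "B 0 = 0" using Bl by (simp add: linear_simps)
      ultimately show "u \<in> span {}" by simp
    qed
    then show ?thesis using that by blast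
  next
    case False
    then have "b \<in> opf_spectrum T {\<alpha>..\<beta>}" using bI unfolding opf_spectrum_def by simp
    moreover have "b \<noteq> \<alpha>" "b \<noteq> \<beta>" using False as(7,8) unfolding opf_rho_def by auto
    ultimately have "b \<in> opf_spectrum T {\<alpha>..\<beta>} \<inter> {\<alpha><..<\<beta>}" using bI by auto
    then have "b \<in> opf_dis T {\<alpha>..\<beta>}" using as(10) by blast
    then have "fredholm_op (T b)" unfolding opf_dis_def opf_ess_def using bI by auto
    then obtain F where F: "finite F" "{x\<in>fst (T b). snd (T b) x = 0} \<subseteq> span F"
      unfolding fredholm_op_def by blast
    have "range (E b {0}) \<subseteq> span F"
    proof
      fix u assume "u \<in> range (E b {0})"
      then obtain y where y: "u = E b {0} y" by blast
      have "E b {0} u = u" unfolding y using P.Eidem[OF b0] by simp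
      from P.KER[OF this] show "u \<in> span F" using F(2) by blast
    qed
    then show ?thesis using that F(1) by blast
  qed

  define K1 where "K1 = {k. E b {0} k = k \<and> norm k = 1}"
  have E0l: "bounded_linear (E b {0})" by (rule P.Elin[OF b0])
  have K1c: "compact K1"
  proof (rule fin_span_compact[OF F(1)])
    show "K1 \<subseteq> span F"
    proof
      fix k assume "k \<in> K1"
      then have "k = E b {0} k" unfolding K1_def by simp
      then have "k \<in> range (E b {0})" by (metis rangeI)
      then show "k \<in> span F" using F(2) by blast
    qed
    show "closed K1" unfolding K1_def
      by (intro closed_Collect_conj closed_Collect_eq continuous_on_id continuous_on_norm
          linear_continuous_on[OF E0l] continuous_on_const)
    show "bounded K1" unfolding K1_def bounded_iff by auto
  qed
  have H1ne: "H1 \<noteq> {}" using H1sub subspace_0 by blast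
  obtain d where d: "d > 0" "\<forall>k\<in>K1. d \<le> infdist k H1"
  proof (cases "K1 = {}")
    case True then show ?thesis using that[of 1] by simp
  next
    case False
    have "continuous_on K1 (\<lambda>k. infdist k H1)" by (intro continuous_on_infdist continuous_on_id)
    then obtain k0 where k0: "k0 \<in> K1" "\<forall>k\<in>K1. infdist k0 H1 \<le> infdist k H1"
      using continuous_attains_inf[OF K1c False] by blast
    have "k0 \<notin> H1"
    proof
      assume "k0 \<in> H1"
      moreover have "k0 \<noteq> 0" using k0(1) unfolding K1_def by auto
      ultimately have "form_val (E b) k0 < 0" using FV by blast
      moreover have "form_val (E b) k0 = 0" using FK k0(1) unfolding K1_def by blast
      ultimately show False by simp
    qed
    then have "infdist k0 H1 > 0" using infdist_pos_not_in_closed[OF as(15) H1ne] by blast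
    then show ?thesis using that k0(2) by blast
  qed

  have EST: "\<exists>c>0. \<forall>x\<in>H1. c * norm x \<le> norm (E b {..<0} x)"
  proof -
    define C where "C = 1 - m / \<delta>"
    have C1: "C \<ge> 1" unfolding C_def using m(1) as(18) by (simp add: divide_nonpos_pos)
    define c0 where "c0 = d / (1 + d)"
    have c0: "0 < c0" "c0 \<le> 1" unfolding c0_def using d(1) by auto
    have main: "c0 / C * norm x \<le> norm (E b {..<0} x)" if x: "x \<in> H1" for x
    proof -
      define p where "p = E b {0} x"
      define e where "e = norm (x - p)"
      define a where "a = norm (E b {..<0} x)"
      define w where "w = norm (E b {0<..} x)"
      have b1: "{..<(0::real)} \<in> sets borel" "{(0::real)<..} \<in> sets borel" by simp_all
      have cz: "-{0::real} = {..<0} \<union> {0<..}" by auto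
      have xp: "x - p = E b {..<0} x + E b {0<..} x"
      proof -
        have dj: "{..<(0::real)} \<inter> {0<..} = {}" by auto
        show ?thesis
          using P.Ecompl[OF b0, of x] P.Eunion2[OF b1 dj, of x] unfolding p_def cz by simp
      qed
      have dj0: "{..<(0::real)} \<inter> {0<..} = {}" by auto
      have "inner (E b {..<0} x) (E b {0<..} x) = inner x (E b ({..<0} \<inter> {0<..}) x)"
        using P.Eself[OF b1(1)] P.Einter[OF b1] by simp
      then have "inner (E b {..<0} x) (E b {0<..} x) = 0" unfolding dj0 by (simp add: P.Eempty)
      then have orth: "orthogonal (E b {..<0} x) (E b {0<..} x)" unfolding orthogonal_def .
      have e2: "e\<^sup>2 = a\<^sup>2 + w\<^sup>2" unfolding e_def a_def w_def xp by (rule norm_add_Pythagorean[OF orth])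
      have fbx: "m * a\<^sup>2 + \<delta> * w\<^sup>2 \<le> form_val (E b) x"
        using FB[of x] x as(16) unfolding a_def w_def by blast
      have "m * a\<^sup>2 + \<delta> * w\<^sup>2 \<le> 0"
      proof (cases "x = 0")
        case True then show ?thesis by (simp add: a_def w_def P.E0)
      next
        case False then show ?thesis using FV[OF x] fbx by linarith
      qed
      then have h: "\<delta> * w\<^sup>2 \<le> - m * a\<^sup>2" by linarith
      have "w\<^sup>2 = (\<delta> * w\<^sup>2) / \<delta>" using as(18) by simp
      also have "\<dots> \<le> (- m * a\<^sup>2) / \<delta>" using h as(18) by (intro divide_right_mono) auto
      also have "\<dots> = (- m / \<delta>) * a\<^sup>2" by simp
      finally have wle: "w\<^sup>2 \<le> (- m / \<delta>) * a\<^sup>2" .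
      have Ceq: "C * a\<^sup>2 = a\<^sup>2 + (- m / \<delta>) * a\<^sup>2" unfolding C_def by (simp add: ring_distribs)
      have e2le: "e\<^sup>2 \<le> C * a\<^sup>2" unfolding e2 Ceq using wle by linarith
      have "C * a\<^sup>2 \<le> (C * C) * a\<^sup>2" using C1 by (intro mult_right_mono) auto
      also have "\<dots> = (C * a)\<^sup>2" by (simp add: power2_eq_square)
      finally have "e\<^sup>2 \<le> (C * a)\<^sup>2" using e2le by linarith
      moreover have "0 \<le> C * a" using C1 by (simp add: a_def)
      ultimately have eCa: "e \<le> C * a" by (rule power2_le_imp_le)
      have c0e: "c0 * norm x \<le> e"
      proof (cases "p = 0")
        case True
        then have "e = norm x" by (simp add: e_def)
        then show ?thesis using c0 by (simp add: mult_left_le_one_le)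
      next
        case False
        define np where "np = norm p"
        have np: "np > 0" using False by (simp add: np_def)
        define k where "k = (1 / np) *\<^sub>R p"
        have "E b {0} p = p" unfolding p_def using P.Eidem[OF b0] by simp
        then have "E b {0} k = k" unfolding k_def using P.Escale[OF b0] by simp
        moreover have "norm k = 1" unfolding k_def using np by (simp add: np_def)
        ultimately have kK: "k \<in> K1" by (simp add: K1_def)
        have x': "(1 / np) *\<^sub>R x \<in> H1" using H1sub x by (simp add: subspace_scale)
        have "infdist k H1 \<le> dist k ((1 / np) *\<^sub>R x)" by (rule infdist_le[OF x'])
        also have "\<dots> = norm ((1 / np) *\<^sub>R (p - x))" unfolding k_def dist_norm by (simp add: scaleR_diff_right)
        also have "\<dots> = e / np" using np by (simp add: e_def norm_minus_commute)
        finally have "d \<le> e / np" using d(2) kK by (meson order_trans)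
        then have dnp: "d * np \<le> e" using np by (simp add: field_simps)
        have "norm x \<le> np + e" unfolding np_def e_def
          using norm_triangle_ineq[of p "x - p"] by simp
        then have "d * norm x \<le> d * np + d * e" using d(1)
          by (metis distrib_left mult_left_mono less_imp_le)
        then have "d * norm x \<le> (1 + d) * e" using dnp by (simp add: algebra_simps)
        then show ?thesis unfolding c0_def using d(1) by (simp add: field_simps)
      qed
      have "c0 * norm x \<le> C * a" using c0e eCa by linarith
      then show ?thesis using C1 by (simp add: field_simps a_def)
    qed
    moreover have "c0 / C > 0" using c0 C1 by simp
    ultimately show ?thesis by blast
  qed
  then obtain c where c: "c > 0" "\<forall>x\<in>H1. c * norm x \<le> norm (E b {..<0} x)" by blast
  have CL1: "closed {x + y |x y. x \<in> H1 \<and> y \<in> range (E b {0..})}"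
    by (rule P.closed_sum[OF _ H1sub as(15) c(1)]) (use c(2) in \<open>simp_all add: Compl_atLeast\<close>)
  have CL2: "closed {x + y |x y. x \<in> H1 \<and> y \<in> range (E b {0<..})}"
  proof (rule P.closed_sum[OF _ H1sub as(15) c(1)])
    show "{0::real<..} \<in> sets borel" by simp
    show "\<forall>x\<in>H1. c * norm x \<le> norm (E b (- {0<..}) x)"
    proof
      fix x assume x: "x \<in> H1"
      have "E b {..<0} x = E b {..<0} (E b {..0} x)"
      proof -
        have "{..<(0::real)} \<inter> {..0} = {..<0}" by auto
        then show ?thesis using P.Einter[of "{..<0}" "{..0}" x] by simp
      qed
      then have "norm (E b {..<0} x) \<le> norm (E b {..0} x)" using P.Ele[of "{..<0}"] by simp
      moreover have "c * norm x \<le> norm (E b {..<0} x)" using c(2) x by blast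
      ultimately show "c * norm x \<le> norm (E b (- {0<..}) x)" by (simp add: Compl_greaterThan)
    qed
  qed
  have DS1: "H1 \<inter> range (E b {0..}) = {0}" by (rule DS) auto
  have DS2: "H1 \<inter> range (E b {0<..}) = {0}" by (rule DS) auto
  show ?thesis unfolding spec_subspace_def using DS1 DS2 CL1 CL2 by blast
qed

end
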